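(* Let $m,k$ be positive integers with $\gcd(k,m)=1$ and $m$ odd, and let $\pi(x)=x^{2^k+1}$ on $\mathbb{F}_{2^m}$. Then for all $(a_1,a_2),(b_1,b_2)\in\mathbb{F}_{2^m}\times\mathbb{F}_{2^m}$, the identities \[\pi(x)+\pi(x+a_2)+\pi(x+b_2)+\pi(x+a_2+b_2)=0,\qquad {\rm Tr}_1^m\bigl(a_1\pi(x+a_2)+b_1\pi(x+b_2)+(a_1+b_1)\pi(x+a_2+b_2)\bigr)=0\] hold for all $x\in\mathbb{F}_{2^m}$ if and only if one of the following holds: $(a_1,a_2)=(0,0)$, $(b_1,b_2)=(0,0)$, $(a_1,a_2)=(b_1,b_2)$, or $a_2=b_2=0$.
   Context: ${\rm Tr}_1^m$ denotes the absolute trace from $\mathbb{F}_{2^m}$ to $\mathbb{F}_2$. *)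

theory Defs
  imports Main
begin

text \<open>Absolute trace from GF(2^m) to GF(2), for a finite field of cardinality 2^m,
  as the usual sum of Frobenius conjugates (its value lies in the prime field {0,1}).\<close>
definition abs_trace :: "nat \<Rightarrow> 'a::field \<Rightarrow> 'a" where
  "abs_trace m x = (\<Sum>i<m. x ^ (2 ^ i))"

definition gold_pow :: "nat \<Rightarrow> 'a::field \<Rightarrow> 'a" where
  "gold_pow k x = x ^ (2 ^ k + 1)"

end

theory Submission
  imports Defs
begin

lemma fermat_ff:
  fixes x :: "'a::{field,finite}"
  assumes "x \<noteq> 0"
  shows "x ^ (card (UNIV::'a set) - 1) = 1"
proof -
  let ?N = "UNIV - {0::'a}"
  have bij: "bij_betw (\<lambda>y. x * y) ?N ?N"
    unfolding bij_betw_def inj_on_def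
  proof (intro conjI ballI impI)
    show "(\<lambda>y. x * y) ` ?N = ?N"
    proof
      show "(\<lambda>y. x * y) ` ?N \<subseteq> ?N" using assms by auto
      show "?N \<subseteq> (\<lambda>y. x * y) ` ?N"
      proof
        fix z assume "z \<in> ?N"
        then have "z = x * (z / x)" "z / x \<in> ?N" using assms by auto
        then show "z \<in> (\<lambda>y. x * y) ` ?N" by blast
      qed
    qed
  qed (use assms in auto)
  have "(\<Prod>y\<in>?N. x * y) = (\<Prod>y\<in>?N. y)"
    using prod.reindex_bij_betw[OF bij, of "\<lambda>y. y"] by simp
  moreover have "(\<Prod>y\<in>?N. x * y) = x ^ card ?N * (\<Prod>y\<in>?N. y)"
    by (simp add: prod.distrib)
  moreover have "(\<Prod>y\<in>?N. y) \<noteq> 0" by simp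
  moreover have "card ?N = card (UNIV::'a set) - 1"
    by (simp add: card_Diff_singleton)
  ultimately show ?thesis by simp
qed

lemma char2:
  assumes "card (UNIV :: 'a::{field,finite} set) = 2 ^ m" "m > 0"
  shows "(1::'a) + 1 = 0"
proof -
  have "(-1::'a) ^ (2 ^ m - 1) = 1" using fermat_ff[of "-1::'a"] assms by simp
  moreover have "odd (2 ^ m - 1::nat)" using assms(2) by simp
  ultimately have "(-1::'a) = 1" by simp
  then show ?thesis by (metis add.inverse_inverse add_uminus_conv_diff diff_self)
qed

lemma frob_id:
  assumes "card (UNIV :: 'a::{field,finite} set) = 2 ^ m" "m > 0"
  shows "(x::'a) ^ (2 ^ m) = x"
proof (cases "x = 0")
  case True then show ?thesis using assms by simp
next
  case False
  have "(2::nat)^m = Suc (2^m - 1)" by simp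
  then have "x ^ (2^m) = x ^ (2^m - 1) * x"
    by (metis power_Suc2)
  then show ?thesis using fermat_ff[OF False] assms by simp
qed

lemma iter_fix:
  fixes c :: "'a::comm_ring_1"
  assumes "c ^ (2 ^ j) = c"
  shows "c ^ (2 ^ (j * t)) = c"
proof (induction t)
  case 0 then show ?case by simp
next
  case (Suc t)
  have "c ^ (2 ^ (j * Suc t)) = (c ^ (2 ^ (j * t))) ^ (2 ^ j)"
    by (simp add: power_add power_mult[symmetric] mult.commute)
  then show ?case using Suc assms by simp
qed

lemma two_zero:
  assumes "(1::'a::comm_ring_1) + 1 = 0"
  shows "(y::'a) + y = 0"
proof -
  have "y + y = (1 + 1) * y" by (simp add: algebra_simps)
  then show ?thesis using assms by simp
qed

lemma two_eq:
  assumes "(1::'a::comm_ring_1) + 1 = 0" "(y::'a) + z = 0"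
  shows "y = z"
proof -
  have "z + z = 0" by (rule two_zero[OF assms(1)])
  then have "-z = z" by (metis add.inverse_unique)
  moreover have "y = -z" using assms(2) by (simp add: eq_neg_iff_add_eq_0)
  ultimately show ?thesis by simp
qed

lemma frob_add:
  assumes "(1::'a::comm_ring_1) + 1 = 0"
  shows "((x::'a) + y) ^ (2 ^ i) = x ^ (2 ^ i) + y ^ (2 ^ i)"
proof (induction i)
  case 0 then show ?case by simp
next
  case (Suc i)
  have sq: "(u + v) ^ 2 = u ^ 2 + v ^ 2" for u v :: 'a
  proof -
    have "(u + v) ^ 2 = u ^ 2 + v ^ 2 + (1 + 1) * (u * v)"
      by (simp add: power2_eq_square algebra_simps)
    then show ?thesis using assms by simp
  qed
  have "(x + y) ^ (2 ^ Suc i) = ((x + y) ^ (2 ^ i)) ^ 2"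
    by (simp add: power_mult[symmetric] mult.commute)
  also have "\<dots> = (x ^ (2 ^ i)) ^ 2 + (y ^ (2 ^ i)) ^ 2" using Suc sq by simp
  also have "\<dots> = x ^ (2 ^ Suc i) + y ^ (2 ^ Suc i)"
    by (simp add: power_mult[symmetric] mult.commute)
  finally show ?case .
qed

lemma tr_add:
  assumes "(1::'a::field) + 1 = 0"
  shows "abs_trace m ((x::'a) + y) = abs_trace m x + abs_trace m y"
  unfolding abs_trace_def by (simp add: frob_add[OF assms] sum.distrib)

lemma tr_zero: "abs_trace m (0::'a::field) = 0"
  unfolding abs_trace_def by (simp add: zero_power)

lemma tr_sq:
  assumes "card (UNIV :: 'a::{field,finite} set) = 2 ^ m" "m > 0"
  shows "abs_trace m ((z::'a) ^ 2) = abs_trace m z"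
proof -
  have "abs_trace m (z ^ 2) = (\<Sum>i<m. z ^ (2 ^ Suc i))"
    unfolding abs_trace_def by (simp add: power_mult[symmetric] mult.commute)
  also have "\<dots> = (\<Sum>i<Suc m. z ^ (2 ^ i)) - z"
    by (subst sum.lessThan_Suc_shift) simp
  also have "\<dots> = abs_trace m z"
    unfolding abs_trace_def using frob_id[OF assms, of z] by simp
  finally show ?thesis .
qed

lemma tr_pow:
  assumes "card (UNIV :: 'a::{field,finite} set) = 2 ^ m" "m > 0"
  shows "abs_trace m ((z::'a) ^ (2 ^ j)) = abs_trace m z"
proof (induction j)
  case 0 then show ?case by simp
next
  case (Suc j)
  have "z ^ (2 ^ Suc j) = (z ^ (2 ^ j)) ^ 2"
    by (simp add: power_mult[symmetric] mult.commute)
  then show ?case using tr_sq[OF assms, of "z ^ (2 ^ j)"] Suc by simp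
qed

lemma tr_one:
  assumes "(1::'a::field) + 1 = 0" "odd m"
  shows "abs_trace m (1::'a) = 1"
proof -
  obtain t where t: "m = 2 * t + 1" using assms(2) oddE by blast
  have "abs_trace m (1::'a) = of_nat m" unfolding abs_trace_def by simp
  also have "\<dots> = (1 + 1) * of_nat t + 1" using t by (simp add: algebra_simps)
  also have "\<dots> = 1" using assms(1) by simp
  finally show ?thesis .
qed

lemma fixed_field:
  assumes "card (UNIV :: 'a::{field,finite} set) = 2 ^ m" "m > 0" "k > 0" "gcd k m = 1"
    and "(c::'a) ^ (2 ^ k) = c"
  shows "c = 0 \<or> c = 1"
proof -
  obtain x y where xy: "k * x = m * y + 1" using bezout_nat[of k m] assms(3,4) by auto
  have "c ^ (2 ^ (k * x)) = c" by (rule iter_fix[OF assms(5)])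
  moreover have "c ^ (2 ^ (m * y)) = c" by (rule iter_fix[OF frob_id[OF assms(1,2)]])
  moreover have "c ^ (2 ^ (m * y + 1)) = (c ^ (2 ^ (m * y))) ^ 2"
    by (simp add: power_mult[symmetric] mult.commute)
  ultimately have "c ^ 2 = c" using xy by simp
  then have "c * (c - 1) = 0" by (simp add: power2_eq_square algebra_simps)
  then show ?thesis by simp
qed

lemma gold_expand:
  assumes "(1::'a::field) + 1 = 0"
  shows "gold_pow k ((x::'a) + a) = (x ^ (2^k) + a ^ (2^k)) * (x + a)"
  unfolding gold_pow_def using frob_add[OF assms] by simp

lemma core:
  assumes "card (UNIV :: 'a::{field,finite} set) = 2 ^ m" "m > 0" "k > 0" "gcd k m = 1"
    and "odd m" and "(b::'a) \<noteq> 0"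
    and H: "\<forall>x::'a. abs_trace m (e * (gold_pow k x + gold_pow k (x + b))) = 0"
  shows "e = 0"
proof (rule ccontr)
  assume e0: "e \<noteq> 0"
  have c2: "(1::'a) + 1 = 0" by (rule char2[OF assms(1,2)])
  define q :: nat where "q = 2 ^ k"
  have ex: "e * (gold_pow k x + gold_pow k (x + b)) = e * b * x ^ q + e * b ^ q * x + e * b ^ q * b" for x
  proof -
    have g0: "gold_pow k x = x ^ q * x" unfolding gold_pow_def q_def by simp
    have "e * (gold_pow k x + gold_pow k (x + b)) = e * b * x ^ q + e * b ^ q * x + e * b ^ q * b
        + (1 + 1) * (e * x ^ q * x)"
      unfolding g0 gold_expand[OF c2] q_def[symmetric] by (simp add: algebra_simps)
    then show ?thesis using c2 by simp
  qed
  define u where "u = e * b ^ q * b"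
  have Hx: "abs_trace m (e * b * x ^ q) + abs_trace m (e * b ^ q * x) + abs_trace m u = 0" for x
  proof -
    have "abs_trace m (e * b * x ^ q + e * b ^ q * x + u) = 0" using H ex[of x] u_def by metis
    then show ?thesis by (simp add: tr_add[OF c2])
  qed
  have tu: "abs_trace m u = 0" using Hx[of 0] q_def by (simp add: tr_zero zero_power)
  define j where "j = m * k - k"
  have jk: "2 ^ k * 2 ^ j = (2::nat) ^ (m * k)"
  proof -
    have "k \<le> m * k" using assms(2) by simp
    then have "k + j = m * k" unfolding j_def by simp
    then show ?thesis by (metis power_add)
  qed
  have xmk: "(x::'a) ^ (2 ^ (m * k)) = x" for x by (rule iter_fix[OF frob_id[OF assms(1,2)]])
  have "abs_trace m (e * b * x ^ q) = abs_trace m ((e * b) ^ (2 ^ j) * x)" for x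
  proof -
    have "(e * b * x ^ q) ^ (2 ^ j) = (e * b) ^ (2 ^ j) * x ^ (2 ^ k * 2 ^ j)"
      unfolding q_def by (simp add: power_mult_distrib power_mult)
    also have "\<dots> = (e * b) ^ (2 ^ j) * x" using jk xmk by simp
    finally show ?thesis using tr_pow[OF assms(1,2), of "e * b * x ^ q" j] by simp
  qed
  then have H2: "abs_trace m (((e * b) ^ (2 ^ j) + e * b ^ q) * x) = 0" for x
    using Hx[of x] tu by (simp add: tr_add[OF c2] distrib_right)
  have w0: "(e * b) ^ (2 ^ j) + e * b ^ q = 0"
  proof (rule ccontr)
    assume w: "(e * b) ^ (2 ^ j) + e * b ^ q \<noteq> 0"
    have "abs_trace m (((e * b) ^ (2 ^ j) + e * b ^ q) * inverse ((e * b) ^ (2 ^ j) + e * b ^ q)) = 0"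
      by (rule H2)
    then show False using w tr_one[OF c2 assms(5)] by simp
  qed
  then have w1: "(e * b) ^ (2 ^ j) = e * b ^ q" by (rule two_eq[OF c2])
  have "e * b = ((e * b) ^ (2 ^ j)) ^ q"
    using xmk[of "e * b"] jk unfolding q_def by (simp add: power_mult[symmetric] mult.commute)
  also have "\<dots> = e ^ q * b ^ (q * q)" using w1 by (simp add: power_mult_distrib power_mult)
  finally have eb: "e * b = e ^ q * b ^ (q * q)" .
  have "u ^ q = e ^ q * b ^ (q * q) * b ^ q" unfolding u_def
    by (simp add: power_mult_distrib power_mult)
  also have "\<dots> = u" unfolding u_def using eb by (simp add: algebra_simps)
  finally have "u ^ (2 ^ k) = u" unfolding q_def .
  then have "u = 0 \<or> u = 1" using fixed_field[OF assms(1-4)] by blast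
  moreover have "u \<noteq> 0" unfolding u_def using e0 assms(6) by simp
  ultimately have "u = 1" by simp
  then show False using tu tr_one[OF c2 assms(5)] by simp
qed


lemma sum4:
  assumes c2: "(1::'a::field) + 1 = 0"
  shows "gold_pow k x + gold_pow k (x + a) + gold_pow k (x + b) + gold_pow k (x + a + b)
         = a ^ (2^k) * b + a * (b::'a) ^ (2^k)"
proof -
  have g0: "gold_pow k x = x ^ (2^k) * x" unfolding gold_pow_def by simp
  have "x + a + b = x + (a + b)" by (simp add: algebra_simps)
  then have "gold_pow k x + gold_pow k (x + a) + gold_pow k (x + b) + gold_pow k (x + a + b)
     = a ^ (2^k) * b + a * b ^ (2^k) + (1 + 1) * (x ^ (2^k) * x * (1 + 1) + x ^ (2^k) * (a + b)
        + x * (a ^ (2^k) + b ^ (2^k)) + a ^ (2^k) * a + b ^ (2^k) * b)"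
    unfolding g0 by (simp add: gold_expand[OF c2] frob_add[OF c2] algebra_simps)
  then show ?thesis using c2 by (metis add.right_neutral mult_zero_left)
qed

lemma first_cond:
  assumes "card (UNIV :: 'a::{field,finite} set) = 2 ^ m" "m > 0" "k > 0" "gcd k m = 1"
    and "(a::'a) ^ (2^k) * b + a * b ^ (2^k) = 0"
  shows "a = 0 \<or> b = 0 \<or> a = b"
proof (rule ccontr)
  assume "\<not> ?thesis"
  then have a: "a \<noteq> 0" and b: "b \<noteq> 0" and ab: "a \<noteq> b" by auto
  have c2: "(1::'a) + 1 = 0" by (rule char2[OF assms(1,2)])
  have eq: "a ^ (2^k) * b = a * b ^ (2^k)" by (rule two_eq[OF c2 assms(5)])
  have "(b / a) ^ (2^k) = b / a"
    using eq a b by (simp add: power_divide divide_simps mult.commute)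
  then have "b / a = 0 \<or> b / a = 1" by (rule fixed_field[OF assms(1-4)])
  then show False using a b ab by auto
qed

theorem lemma3p11:
  fixes m k :: nat and a1 a2 b1 b2 :: "'a::{field,finite}"
  assumes "card (UNIV :: 'a set) = 2 ^ m"
    and "m > 0" and "k > 0" and "gcd k m = 1" and "odd m"
  shows "((\<forall>x::'a. gold_pow k x + gold_pow k (x + a2) + gold_pow k (x + b2)
                     + gold_pow k (x + a2 + b2) = 0)
          \<and> (\<forall>x::'a. abs_trace m (a1 * gold_pow k (x + a2) + b1 * gold_pow k (x + b2)
                     + (a1 + b1) * gold_pow k (x + a2 + b2)) = 0))
     \<longleftrightarrow> ((a1, a2) = (0, 0) \<or> (b1, b2) = (0, 0) \<or> (a1, a2) = (b1, b2)
          \<or> (a2 = 0 \<and> b2 = 0))"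
proof -
  have c2: "(1::'a) + 1 = 0" by (rule char2[OF assms(1,2)])
  have tz: "\<And>y::'a. y + y = 0" by (rule two_zero[OF c2])
  have c2': "(2::'a) = 0" using c2 by simp
  have pz: "\<And>i. (0::'a) ^ (2^i) = 0" by (simp add: zero_power)
  show ?thesis
  proof
    assume L: "(\<forall>x::'a. gold_pow k x + gold_pow k (x + a2) + gold_pow k (x + b2)
                     + gold_pow k (x + a2 + b2) = 0)
          \<and> (\<forall>x::'a. abs_trace m (a1 * gold_pow k (x + a2) + b1 * gold_pow k (x + b2)
                     + (a1 + b1) * gold_pow k (x + a2 + b2)) = 0)"
    then have "a2 ^ (2^k) * b2 + a2 * b2 ^ (2^k) = 0" using sum4[OF c2] by metis
    then have cs: "a2 = 0 \<or> b2 = 0 \<or> a2 = b2" by (rule first_cond[OF assms(1-4)])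
    have L2: "\<And>x. abs_trace m (a1 * gold_pow k (x + a2) + b1 * gold_pow k (x + b2)
                     + (a1 + b1) * gold_pow k (x + a2 + b2)) = 0" using L by blast
    show "(a1, a2) = (0, 0) \<or> (b1, b2) = (0, 0) \<or> (a1, a2) = (b1, b2) \<or> (a2 = 0 \<and> b2 = 0)"
    proof (cases "a2 = 0")
      case a0: True
      show ?thesis
      proof (cases "b2 = 0")
        case True then show ?thesis using a0 by simp
      next
        case b: False
        have "\<forall>x. abs_trace m (a1 * (gold_pow k x + gold_pow k (x + b2))) = 0"
        proof
          fix x
          have "a1 * gold_pow k (x + a2) + b1 * gold_pow k (x + b2)
                     + (a1 + b1) * gold_pow k (x + a2 + b2)
              = a1 * (gold_pow k x + gold_pow k (x + b2)) + b1 * gold_pow k (x + b2) * (1 + 1)"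
            using a0 by (simp add: algebra_simps)
          then show "abs_trace m (a1 * (gold_pow k x + gold_pow k (x + b2))) = 0"
            using L2[of x] c2 by (metis add.right_neutral mult_zero_right)
        qed
        then have "a1 = 0" by (rule core[OF assms(1-5) b])
        then show ?thesis using a0 by simp
      qed
    next
      case a: False
      show ?thesis
      proof (cases "b2 = 0")
        case b0: True
        have "\<forall>x. abs_trace m (b1 * (gold_pow k x + gold_pow k (x + a2))) = 0"
        proof
          fix x
          have "a1 * gold_pow k (x + a2) + b1 * gold_pow k (x + b2)
                     + (a1 + b1) * gold_pow k (x + a2 + b2)
              = b1 * (gold_pow k x + gold_pow k (x + a2)) + a1 * gold_pow k (x + a2) * (1 + 1)"
            using b0 by (simp add: algebra_simps)
          then show "abs_trace m (b1 * (gold_pow k x + gold_pow k (x + a2))) = 0"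
            using L2[of x] c2 by (metis add.right_neutral mult_zero_right)
        qed
        then have "b1 = 0" by (rule core[OF assms(1-5) a])
        then show ?thesis using b0 by simp
      next
        case False
        then have ab: "a2 = b2" using cs a by simp
        have "\<forall>x. abs_trace m ((a1 + b1) * (gold_pow k x + gold_pow k (x + a2))) = 0"
        proof
          fix x
          have xx: "x + a2 + a2 = x" using tz[of a2] by (simp add: add.assoc)
          have "a1 * gold_pow k (x + a2) + b1 * gold_pow k (x + b2)
                     + (a1 + b1) * gold_pow k (x + a2 + b2)
              = a1 * gold_pow k (x + a2) + b1 * gold_pow k (x + a2) + (a1 + b1) * gold_pow k x"
            by (simp only: ab[symmetric] xx)
          also have "\<dots> = (a1 + b1) * (gold_pow k x + gold_pow k (x + a2))"
            by (simp add: algebra_simps)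
          finally have "a1 * gold_pow k (x + a2) + b1 * gold_pow k (x + b2)
                     + (a1 + b1) * gold_pow k (x + a2 + b2)
              = (a1 + b1) * (gold_pow k x + gold_pow k (x + a2))" .
          then show "abs_trace m ((a1 + b1) * (gold_pow k x + gold_pow k (x + a2))) = 0"
            using L2[of x] by simp
        qed
        then have "a1 + b1 = 0" by (rule core[OF assms(1-5) a])
        then have "a1 = b1" by (rule two_eq[OF c2])
        then show ?thesis using ab by simp
      qed
    qed
  next
    assume R: "(a1, a2) = (0, 0) \<or> (b1, b2) = (0, 0) \<or> (a1, a2) = (b1, b2) \<or> (a2 = 0 \<and> b2 = 0)"
    have A: "a2 ^ (2^k) * b2 + a2 * b2 ^ (2^k) = 0"
      using R
    proof (elim disjE)
      assume "(a1, a2) = (b1, b2)"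
      then show ?thesis using tz[of "a2 ^ (2^k) * a2"] by (simp add: mult.commute)
    qed (auto simp: pz)
    have B: "a1 * gold_pow k (x + a2) + b1 * gold_pow k (x + b2)
                     + (a1 + b1) * gold_pow k (x + a2 + b2) = 0" for x
      using R
    proof (elim disjE)
      assume "(a1, a2) = (0, 0)"
      then show ?thesis using c2' by simp
    next
      assume "(b1, b2) = (0, 0)"
      then show ?thesis using c2' by simp
    next
      assume "(a1, a2) = (b1, b2)"
      then have e: "a1 = b1" "a2 = b2" by auto
      have "x + a2 + a2 = x" using tz[of a2] by (simp add: add.assoc)
      then show ?thesis using e c2' by simp
    next
      assume "a2 = 0 \<and> b2 = 0"
      then have "a1 * gold_pow k (x + a2) + b1 * gold_pow k (x + b2)
                     + (a1 + b1) * gold_pow k (x + a2 + b2) = (a1 + b1) * gold_pow k x * (1 + 1)"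
        by (simp add: algebra_simps)
      then show ?thesis using c2 by simp
    qed
    show "(\<forall>x::'a. gold_pow k x + gold_pow k (x + a2) + gold_pow k (x + b2)
                     + gold_pow k (x + a2 + b2) = 0)
          \<and> (\<forall>x::'a. abs_trace m (a1 * gold_pow k (x + a2) + b1 * gold_pow k (x + b2)
                     + (a1 + b1) * gold_pow k (x + a2 + b2)) = 0)"
      using A B sum4[OF c2] by (simp add: tr_zero)
  qed
qed

end
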